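(* Let $\bm A=(A_1,\dots,A_{d_1})$ be pairwise commuting Hermitian matrices in $M_n(\mathbb{C})$, let $\bm B=(B_1,\dots,B_{d_2})$ and $\bm C=(C_1,\dots,C_{d_2})$ be tuples of matrices in $M_n(\mathbb{C})$, and let $(\bm\lambda,\bm\nu)\in\mathbb{R}^{d_1}\times\mathbb{C}^{d_2}$. Assume $Z^2:=\sum_{i=1}^{d_1}(A_i-\lambda_iI)^2$ is invertible and let $Z$ be its positive definite square root. If $$\Big\|Z^{-1}\Big(\sum_{j=1}^{d_2}(B_j-\nu_jI)^\dagger C_j+C_j^\dagger(B_j-\nu_jI)+C_j^\dagger C_j\Big)Z^{-1}\Big\|\le K$$ for some $K<1$, then $$(1-K)^{1/2}\mu^{RQ}_{(\bm\lambda,\bm\nu)}(\bm A,\bm B)\le\mu^{RQ}_{(\bm\lambda,\bm\nu)}(\bm A,\bm B+\bm C)\le(1+K)^{1/2}\mu^{RQ}_{(\bm\lambda,\bm\nu)}(\bm A,\bm B),$$ where $\bm B+\bm C=(B_1+C_1,\dots,B_{d_2}+C_{d_2})$.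
   Context: For $\bm A=(A_1,\dots,A_{d_1})$ with $A_i\in M_n(\mathbb{C})$ Hermitian, $\bm B=(B_1,\dots,B_{d_2})$ with $B_j\in M_n(\mathbb{C})$ arbitrary, and $(\bm\lambda,\bm\nu)\in\mathbb{R}^{d_1}\times\mathbb{C}^{d_2}$, the right quadratic composite operator is $RQ_{(\bm\lambda,\bm\nu)}(\bm A,\bm B)=\sum_{i=1}^{d_1}(A_i-\lambda_iI)^2+\sum_{j=1}^{d_2}(B_j-\nu_jI)^\dagger(B_j-\nu_jI)$, and the right quadratic gap is $\mu^{RQ}_{(\bm\lambda,\bm\nu)}(\bm A,\bm B)=\sqrt{\lambda_{\min}\big(RQ_{(\bm\lambda,\bm\nu)}(\bm A,\bm B)\big)}$ (square root of the smallest eigenvalue). Matrix norms are operator norms. *)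

theory Defs
  imports "HOL-Analysis.Analysis"
begin

text \<open>Square complex matrices of size n are represented as complex^'n^'n, the
size being the finite index type 'n.  Tuples of matrices are functions
nat => matrix, with the relevant indices i < d.\<close>

definition cmat_adj :: "complex^'n^'m \<Rightarrow> complex^'m^'n" where
  "cmat_adj M = (\<chi> i j. cnj (M $ j $ i))"

definition hermitian_cmat :: "complex^'n^'n \<Rightarrow> bool" where
  "hermitian_cmat M \<longleftrightarrow> cmat_adj M = M"

definition cinner_vec :: "complex^'n \<Rightarrow> complex^'n \<Rightarrow> complex" where
  "cinner_vec v w = (\<Sum>i\<in>UNIV. cnj (v $ i) * w $ i)"

definition posdef_cmat :: "complex^'n^'n \<Rightarrow> bool" where
  "posdef_cmat M \<longleftrightarrow> hermitian_cmat M \<and>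
     (\<forall>v. v \<noteq> 0 \<longrightarrow> 0 < Re (cinner_vec v (M *v v)))"

definition opnorm :: "complex^'n^'m \<Rightarrow> real" where
  "opnorm M = onorm (\<lambda>v. M *v v)"

text \<open>Smallest eigenvalue of a Hermitian matrix (its eigenvalues are real).\<close>
definition lambda_min :: "complex^'n^'n \<Rightarrow> real" where
  "lambda_min M = Min {r::real. \<exists>v. v \<noteq> 0 \<and> M *v v = complex_of_real r *s v}"

definition RQ :: "nat \<Rightarrow> nat \<Rightarrow> (nat \<Rightarrow> real) \<Rightarrow> (nat \<Rightarrow> complex)
     \<Rightarrow> (nat \<Rightarrow> complex^'n^'n) \<Rightarrow> (nat \<Rightarrow> complex^'n^'n) \<Rightarrow> complex^'n^'n" where
  "RQ d1 d2 lam nu A B =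
     (\<Sum>i<d1. (A i - mat (complex_of_real (lam i))) ** (A i - mat (complex_of_real (lam i))))
   + (\<Sum>j<d2. cmat_adj (B j - mat (nu j)) ** (B j - mat (nu j)))"

definition mu_RQ :: "nat \<Rightarrow> nat \<Rightarrow> (nat \<Rightarrow> real) \<Rightarrow> (nat \<Rightarrow> complex)
     \<Rightarrow> (nat \<Rightarrow> complex^'n^'n) \<Rightarrow> (nat \<Rightarrow> complex^'n^'n) \<Rightarrow> real" where
  "mu_RQ d1 d2 lam nu A B = sqrt (lambda_min (RQ d1 d2 lam nu A B))"

end

theory Submission
  imports Defs
begin

lemma adj_inner:
  fixes M :: "complex^'n^'m" and v :: "complex^'m" and w :: "complex^'n"
  shows "(cmat_adj M *v v) \<bullet> w = v \<bullet> (M *v w)"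
proof -
  have "(cmat_adj M *v v) \<bullet> w = (\<Sum>j\<in>UNIV. \<Sum>i\<in>UNIV. (cnj (M$i$j) * v$i) \<bullet> w$j)"
    by (simp add: inner_vec_def matrix_vector_mult_def cmat_adj_def inner_sum_left)
  also have "\<dots> = (\<Sum>i\<in>UNIV. \<Sum>j\<in>UNIV. (cnj (M$i$j) * v$i) \<bullet> w$j)"
    by (rule sum.swap)
  also have "\<dots> = (\<Sum>i\<in>UNIV. \<Sum>j\<in>UNIV. v$i \<bullet> (M$i$j * w$j))"
    by (intro sum.cong refl) (simp add: inner_complex_def algebra_simps)
  also have "\<dots> = v \<bullet> (M *v w)"
    by (simp add: inner_vec_def matrix_vector_mult_def inner_sum_right)
  finally show ?thesis .
qed

definition rsym :: "complex^'n^'n \<Rightarrow> bool" where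
  "rsym M \<longleftrightarrow> (\<forall>u w. u \<bullet> (M *v w) = (M *v u) \<bullet> w)"

lemma herm_rsym: "hermitian_cmat M \<Longrightarrow> rsym M"
  unfolding rsym_def hermitian_cmat_def using adj_inner[of M] by metis

lemma rsym_add: "rsym M \<Longrightarrow> rsym N \<Longrightarrow> rsym (M + N)"
  unfolding rsym_def by (simp add: matrix_vector_mult_add_rdistrib inner_add_left inner_add_right)

lemma rsym_diff: "rsym M \<Longrightarrow> rsym N \<Longrightarrow> rsym (M - N)"
  unfolding rsym_def by (simp add: matrix_vector_mult_diff_rdistrib inner_diff_left inner_diff_right)

lemma mat_mult_vec: "mat c *v (v::'a::comm_ring_1^'n) = c *s v"
proof -
  have "\<And>i j. (if i = j then c else 0) * v$j = (if i = j then c * v$j else 0)" by simp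
  then show ?thesis by (simp add: vec_eq_iff matrix_vector_mult_def mat_def)
qed

lemma ofreal_smult: "complex_of_real r *s (w::complex^'n) = r *\<^sub>R w"
  by (simp add: vec_eq_iff) (simp add: scaleR_conv_of_real)

lemma rsym_mat: "rsym (mat (complex_of_real c) :: complex^'n^'n)"
  unfolding rsym_def by (simp add: mat_mult_vec ofreal_smult inner_commute)

lemma zero_mvec: "(0::complex^'n^'n) *v w = 0"
  by (simp add: vec_eq_iff matrix_vector_mult_def)

lemma rsym_zero: "rsym (0 :: complex^'n^'n)"
  unfolding rsym_def by (simp add: zero_mvec)

lemma rsym_sum: "(\<And>i. i \<in> S \<Longrightarrow> rsym (f i)) \<Longrightarrow> rsym (sum f S)"
proof (induction S rule: infinite_finite_induct)
  case (infinite A) then show ?case by (simp add: rsym_zero)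
next
  case empty then show ?case by (simp add: rsym_zero)
next
  case (insert x F) then show ?case by (simp add: rsym_add)
qed

lemma rsym_sq: "rsym P \<Longrightarrow> rsym (P ** P)"
  unfolding rsym_def by (simp flip: matrix_vector_mul_assoc)

lemma qf_adj: "u \<bullet> ((cmat_adj E ** C) *v w) = (E *v u) \<bullet> (C *v (w::complex^'n))"
  for E C :: "complex^'n^'n"
proof -
  have "u \<bullet> ((cmat_adj E ** C) *v w) = (cmat_adj E *v (C *v w)) \<bullet> u"
    by (simp add: inner_commute flip: matrix_vector_mul_assoc)
  also have "\<dots> = (C *v w) \<bullet> (E *v u)" by (rule adj_inner)
  finally show ?thesis by (simp add: inner_commute)
qed

lemma rsym_adjsq: "rsym (cmat_adj E ** (E::complex^'n^'n))"
  unfolding rsym_def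
proof (intro allI)
  fix u w :: "complex^'n"
  have "(cmat_adj E ** E *v u) \<bullet> w = w \<bullet> (cmat_adj E ** E *v u)" by (rule inner_commute)
  then show "u \<bullet> (cmat_adj E ** E *v w) = (cmat_adj E ** E *v u) \<bullet> w"
    by (simp add: qf_adj inner_commute)
qed

lemma sum_mvec: "(sum f S) *v v = (\<Sum>i\<in>S. f i *v v)"
proof (induction S rule: infinite_finite_induct)
  case (infinite A) then show ?case by (simp add: vec_eq_iff matrix_vector_mult_def)
next
  case empty then show ?case by (simp add: vec_eq_iff matrix_vector_mult_def)
next
  case (insert x F) then show ?case by (simp add: matrix_vector_mult_add_rdistrib)
qed

lemma mvec_scaleR: "(M::complex^'n^'n) *v (t *\<^sub>R w) = t *\<^sub>R (M *v w)"
  using matrix_vector_mul_bounded_linear[of M]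
  by (simp add: bounded_linear.linear linear_scale)

lemma mvec_zero: "(M::complex^'n^'n) *v 0 = 0"
  by (simp add: vec_eq_iff matrix_vector_mult_def)

lemma lmin:
  fixes M :: "complex^'n^'n"
  assumes sym: "rsym M"
  shows "(\<forall>v. lambda_min M * (v \<bullet> v) \<le> v \<bullet> (M *v v)) \<and>
         (\<exists>v. v \<noteq> 0 \<and> v \<bullet> (M *v v) = lambda_min M * (v \<bullet> v))"
proof -
  define f where "f v = v \<bullet> (M *v v)" for v :: "complex^'n"
  have cont: "continuous_on (sphere 0 1) f"
    unfolding f_def
    by (intro continuous_intros linear_continuous_on matrix_vector_mul_bounded_linear)
  have ne: "sphere (0::complex^'n) 1 \<noteq> {}" by simp
  obtain v0 where v0s: "v0 \<in> sphere 0 1" and v0min: "\<forall>y\<in>sphere 0 1. f v0 \<le> f y"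
    using continuous_attains_inf[OF compact_sphere ne cont] by blast
  define m where "m = f v0"
  have v0n: "v0 \<bullet> v0 = 1" using v0s by (simp add: dot_square_norm)
  have fscale: "f (c *\<^sub>R u) = c * c * f u" for c u
    by (simp add: f_def mvec_scaleR)
  have ge: "m * (u \<bullet> u) \<le> f u" for u
  proof (cases "u = 0")
    case True then show ?thesis by (simp add: f_def mvec_zero)
  next
    case False
    define c where "c = 1 / norm u"
    have cpos: "c > 0" using False by (simp add: c_def)
    have "c *\<^sub>R u \<in> sphere 0 1" using False by (simp add: c_def)
    then have "m \<le> c * c * f u" using v0min fscale m_def by metis
    then have "m * (norm u * norm u) \<le> (c * norm u) * (c * norm u) * f u"
      using False by (simp add: algebra_simps mult_right_mono)
    also have "c * norm u = 1" using False by (simp add: c_def)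
    finally show ?thesis by (simp add: dot_square_norm power2_eq_square)
  qed
  define G where "G u = M *v u - m *\<^sub>R u" for u
  have Gsym: "x \<bullet> G y = G x \<bullet> y" for x y
    using sym unfolding rsym_def G_def by (simp add: inner_diff_left inner_diff_right)
  have Glin: "G (x + t *\<^sub>R y) = G x + t *\<^sub>R G y" for x y t
    by (simp add: G_def matrix_vector_right_distrib mvec_scaleR algebra_simps)
  have Rge: "0 \<le> u \<bullet> G u" for u
    using ge[of u] by (simp add: G_def f_def inner_diff_right)
  have R0: "v0 \<bullet> G v0 = 0" using v0n by (simp add: G_def f_def inner_diff_right m_def)
  have Gv0: "G v0 = 0"
  proof -
    define w where "w = G v0"
    define a where "a = w \<bullet> w"
    define r where "r = w \<bullet> G w"
    have r0: "r \<ge> 0" using Rge r_def by simp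
    have expand: "(v0 + t *\<^sub>R w) \<bullet> G (v0 + t *\<^sub>R w) = 2 * t * a + t * t * r" for t
    proof -
      have "(v0 + t *\<^sub>R w) \<bullet> G (v0 + t *\<^sub>R w)
          = v0 \<bullet> G v0 + t * (v0 \<bullet> G w) + t * (w \<bullet> G v0) + t * t * (w \<bullet> G w)"
        by (simp add: Glin inner_add_left inner_add_right algebra_simps)
      also have "v0 \<bullet> G w = a" using Gsym w_def a_def by simp
      also have "w \<bullet> G v0 = a" using w_def a_def by simp
      finally show ?thesis using R0 r_def by simp
    qed
    define t where "t = - a / (r + 1)"
    have "0 \<le> 2 * t * a + t * t * r" using Rge[of "v0 + t *\<^sub>R w"] expand by simp
    then have "0 \<le> (r+1)^2 * (2 * t * a + t * t * r)" by simp
    also have "(r+1)^2 * (2 * t * a + t * t * r) = - (a * a * (r + 2))"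
    proof -
      have rp: "r + 1 \<noteq> 0" using r0 by linarith
      have tr: "t * (r + 1) = - a" using rp by (simp add: t_def)
      have "(r+1)^2 * (2 * t * a + t * t * r)
          = 2 * a * (t * (r + 1)) * (r + 1) + (t * (r + 1)) * (t * (r + 1)) * r"
        by (simp add: power2_eq_square algebra_simps)
      also have "\<dots> = 2 * a * (- a) * (r + 1) + (- a) * (- a) * r" unfolding tr ..
      also have "\<dots> = - (a * a * (r + 2))" by (simp add: algebra_simps)
      finally show ?thesis .
    qed
    finally have "a * a * (r + 2) \<le> 0" by simp
    moreover have "a * a * (r+2) \<ge> 0" using r0 by simp
    ultimately have "a * a * (r + 2) = 0" by linarith
    then have "a = 0" using r0 by simp
    then show ?thesis using w_def a_def by simp
  qed
  then have eig0: "M *v v0 = complex_of_real m *s v0" by (simp add: G_def ofreal_smult)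
  have v0nz: "v0 \<noteq> 0" using v0n by auto
  define S where "S = {r::real. \<exists>v. v \<noteq> 0 \<and> M *v v = complex_of_real r *s v}"
  have mS: "m \<in> S" using eig0 v0nz unfolding S_def by blast
  have mle: "m \<le> r" if "r \<in> S" for r
  proof -
    have "\<exists>v. v \<noteq> 0 \<and> M *v v = complex_of_real r *s v" using that by (simp add: S_def)
    then obtain v where v: "v \<noteq> 0" "M *v v = complex_of_real r *s v" by blast
    have "f v = r * (v \<bullet> v)" by (simp add: f_def v ofreal_smult)
    then have "m * (v \<bullet> v) \<le> r * (v \<bullet> v)" using ge[of v] by simp
    moreover have "v \<bullet> v > 0" using v by simp
    ultimately show ?thesis using mult_le_cancel_right_pos by blast
  qed
  define ev where "ev r = (SOME v. v \<noteq> 0 \<and> M *v v = complex_of_real r *s v)" for r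
  have evp: "ev r \<noteq> 0 \<and> M *v ev r = r *\<^sub>R ev r" if "r \<in> S" for r
  proof -
    have "\<exists>v. v \<noteq> 0 \<and> M *v v = complex_of_real r *s v" using that by (simp add: S_def)
    then have "ev r \<noteq> 0 \<and> M *v ev r = complex_of_real r *s ev r"
      unfolding ev_def by (rule someI_ex)
    then show ?thesis by (simp add: ofreal_smult)
  qed
  have orth: "ev r \<bullet> ev s = 0" if "r \<in> S" "s \<in> S" "r \<noteq> s" for r s
  proof -
    have "r * (ev r \<bullet> ev s) = (M *v ev r) \<bullet> ev s" using evp[OF that(1)] by simp
    also have "\<dots> = ev r \<bullet> (M *v ev s)" using sym unfolding rsym_def by simp
    also have "\<dots> = s * (ev r \<bullet> ev s)" using evp[OF that(2)] by simp
    finally have "(r - s) * (ev r \<bullet> ev s) = 0" by (simp add: algebra_simps)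
    then show ?thesis using that(3) by simp
  qed
  have inj: "inj_on ev S"
  proof (rule inj_onI)
    fix r s assume rs: "r \<in> S" "s \<in> S" "ev r = ev s"
    have "r *\<^sub>R ev r = M *v ev r" using evp[OF rs(1)] by simp
    also have "\<dots> = M *v ev s" using rs(3) by simp
    also have "\<dots> = s *\<^sub>R ev s" using evp[OF rs(2)] by simp
    finally have "r *\<^sub>R ev r = s *\<^sub>R ev r" using rs(3) by simp
    moreover have "ev r \<noteq> 0" using evp[OF rs(1)] by blast
    ultimately show "r = s" using scaleR_cancel_right by blast
  qed
  have "pairwise orthogonal (ev ` S)"
    unfolding pairwise_def orthogonal_def using orth by blast
  then have "finite (ev ` S)" by (rule pairwise_orthogonal_imp_finite)
  then have finS: "finite S" using inj finite_imageD by blast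
  have lm: "lambda_min M = m"
    unfolding lambda_min_def S_def[symmetric] using finS mS mle by (intro Min_eqI) auto
  show ?thesis
    using ge v0nz v0n lm by (auto simp: f_def m_def intro!: exI[of _ v0])
qed

theorem mainTheorem14:
  fixes A B C :: "nat \<Rightarrow> complex^'n^'n"
    and Z :: "complex^'n^'n"
    and d1 d2 :: nat
    and lam :: "nat \<Rightarrow> real" and nu :: "nat \<Rightarrow> complex"
    and K :: real
  assumes herm: "\<forall>i<d1. hermitian_cmat (A i)"
    and comm: "\<forall>i<d1. \<forall>j<d1. A i ** A j = A j ** A i"
    and Z2_inv: "invertible (\<Sum>i<d1. (A i - mat (complex_of_real (lam i))) ** (A i - mat (complex_of_real (lam i))))"
    and Z_pd: "posdef_cmat Z"
    and Z_sq: "Z ** Z = (\<Sum>i<d1. (A i - mat (complex_of_real (lam i))) ** (A i - mat (complex_of_real (lam i))))"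
    and K_lt: "K < 1"
    and bound: "opnorm (matrix_inv Z ** (\<Sum>j<d2. cmat_adj (B j - mat (nu j)) ** C j
                   + cmat_adj (C j) ** (B j - mat (nu j)) + cmat_adj (C j) ** C j) ** matrix_inv Z) \<le> K"
  shows "sqrt (1 - K) * mu_RQ d1 d2 lam nu A B \<le> mu_RQ d1 d2 lam nu A (\<lambda>j. B j + C j)
       \<and> mu_RQ d1 d2 lam nu A (\<lambda>j. B j + C j) \<le> sqrt (1 + K) * mu_RQ d1 d2 lam nu A B"
proof -
  define P where "P i = A i - mat (complex_of_real (lam i))" for i
  define E where "E j = B j - mat (nu j)" for j
  define X where "X = (\<Sum>i<d1. P i ** P i)"
  define Y where "Y = (\<Sum>j<d2. cmat_adj (E j) ** E j)"
  define Dm where "Dm = (\<Sum>j<d2. cmat_adj (E j) ** C j + cmat_adj (C j) ** E j + cmat_adj (C j) ** C j)"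
  define R1 where "R1 = RQ d1 d2 lam nu A B"
  define R2 where "R2 = RQ d1 d2 lam nu A (\<lambda>j. B j + C j)"
  have R1e: "R1 = X + Y" by (simp add: R1_def RQ_def X_def Y_def P_def E_def)
  have BC: "B j + C j - mat (nu j) = E j + C j" for j by (simp add: E_def algebra_simps)
  have R2e: "R2 = X + (\<Sum>j<d2. cmat_adj (E j + C j) ** (E j + C j))"
    unfolding R2_def RQ_def X_def P_def BC ..
  have qsum: "v \<bullet> ((\<Sum>j\<in>S. F j) *v v) = (\<Sum>j\<in>S. v \<bullet> (F j *v v))" for F S and v :: "complex^'n"
    by (simp add: sum_mvec inner_sum_right)
  have rP: "rsym (P i)" if "i < d1" for i
    unfolding P_def using herm that by (intro rsym_diff herm_rsym rsym_mat) auto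
  have rX: "rsym X" unfolding X_def using rP by (intro rsym_sum rsym_sq) auto
  have rY: "rsym Y" unfolding Y_def by (intro rsym_sum rsym_adjsq)
  have rR1: "rsym R1" using R1e rX rY rsym_add by simp
  have rR2: "rsym R2" unfolding R2e using rX by (intro rsym_add rsym_sum rsym_adjsq)
  have qY: "0 \<le> v \<bullet> (Y *v v)" for v
    unfolding Y_def qsum by (intro sum_nonneg) (simp add: qf_adj)
  have q1: "v \<bullet> (R1 *v v) = v \<bullet> (X *v v) + v \<bullet> (Y *v v)" for v
    by (simp add: R1e matrix_vector_mult_add_rdistrib inner_add_right)
  have q2: "v \<bullet> (R2 *v v) = v \<bullet> (R1 *v v) + v \<bullet> (Dm *v v)" for v
  proof -
    have "v \<bullet> (R2 *v v) = v \<bullet> (X *v v) + (\<Sum>j<d2. ((E j + C j) *v v) \<bullet> ((E j + C j) *v v))"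
      by (simp add: R2e matrix_vector_mult_add_rdistrib inner_add_right qsum qf_adj)
    also have "\<dots> = v \<bullet> (X *v v) + (\<Sum>j<d2. (E j *v v) \<bullet> (E j *v v)) +
        (\<Sum>j<d2. (E j *v v) \<bullet> (C j *v v) + (C j *v v) \<bullet> (E j *v v) + (C j *v v) \<bullet> (C j *v v))"
      by (simp add: matrix_vector_mult_add_rdistrib inner_add_left inner_add_right sum.distrib algebra_simps)
    also have "\<dots> = v \<bullet> (R1 *v v) + v \<bullet> (Dm *v v)"
      by (simp add: q1 Y_def Dm_def qsum qf_adj matrix_vector_mult_add_rdistrib inner_add_right sum.distrib)
    finally show ?thesis .
  qed
  have rZ: "rsym Z" using Z_pd herm_rsym posdef_cmat_def by blast
  have ZZ: "Z ** Z = X" using Z_sq by (simp add: X_def P_def)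
  obtain Xi where Xi: "X ** Xi = mat 1" "Xi ** X = mat 1"
    using Z2_inv unfolding invertible_def X_def P_def by blast
  have L: "(Xi ** Z) ** Z = mat 1" using Xi ZZ by (simp flip: matrix_mul_assoc)
  have R: "Z ** (Z ** Xi) = mat 1" using Xi ZZ by (simp add: matrix_mul_assoc)
  have LR: "Xi ** Z = Z ** Xi"
  proof -
    have "Xi ** Z = (Xi ** Z) ** (Z ** (Z ** Xi))" using R by (simp add: matrix_mul_rid)
    also have "\<dots> = ((Xi ** Z) ** Z) ** (Z ** Xi)" by (simp add: matrix_mul_assoc)
    also have "\<dots> = Z ** Xi" using L by (simp add: matrix_mul_lid)
    finally show ?thesis .
  qed
  have "\<exists>A'. Z ** A' = mat 1 \<and> A' ** Z = mat 1" using L R LR by metis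
  then have Zi: "Z ** matrix_inv Z = mat 1 \<and> matrix_inv Z ** Z = mat 1"
    unfolding matrix_inv_def by (rule someI_ex)
  define Zi where "Zi = matrix_inv Z"
  have bound': "opnorm (Zi ** Dm ** Zi) \<le> K" using bound by (simp add: Zi_def Dm_def E_def)
  have K0: "0 \<le> K"
    using bound' onorm_pos_le[OF matrix_vector_mul_bounded_linear] unfolding opnorm_def
    by (metis order_trans)
  have keyD: "\<bar>v \<bullet> (Dm *v v)\<bar> \<le> K * (v \<bullet> (X *v v))" for v
  proof -
    define w where "w = Z *v v"
    define Mh where "Mh = Zi ** Dm ** Zi"
    have "Mh *v w = Zi *v (Dm *v ((Zi ** Z) *v v))"
      by (simp add: Mh_def w_def flip: matrix_vector_mul_assoc)
    also have "\<dots> = Zi *v (Dm *v v)" using Zi by (simp add: Zi_def matrix_vector_mul_lid)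
    finally have Mw: "Mh *v w = Zi *v (Dm *v v)" .
    have "w \<bullet> (Mh *v w) = w \<bullet> (Zi *v (Dm *v v))" using Mw by simp
    also have "\<dots> = v \<bullet> (Z *v (Zi *v (Dm *v v)))"
      using rZ unfolding rsym_def w_def by simp
    also have "\<dots> = v \<bullet> (Dm *v v)" using Zi by (simp add: Zi_def matrix_vector_mul_assoc matrix_mul_assoc matrix_mul_lid)
    finally have e1: "w \<bullet> (Mh *v w) = v \<bullet> (Dm *v v)" .
    have "w \<bullet> w = v \<bullet> (Z *v (Z *v v))" using rZ unfolding rsym_def w_def by simp
    also have "\<dots> = v \<bullet> (X *v v)" using ZZ by (simp add: matrix_vector_mul_assoc)
    finally have e2: "w \<bullet> w = v \<bullet> (X *v v)" .
    have "\<bar>w \<bullet> (Mh *v w)\<bar> \<le> norm w * norm (Mh *v w)" by (rule Cauchy_Schwarz_ineq2)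
    also have "norm (Mh *v w) \<le> opnorm Mh * norm w"
      unfolding opnorm_def using onorm[OF matrix_vector_mul_bounded_linear] by blast
    then have "norm w * norm (Mh *v w) \<le> norm w * (K * norm w)"
      using bound' Mh_def by (meson mult_left_mono mult_right_mono norm_ge_zero order_trans)
    also have "\<dots> = K * (w \<bullet> w)" by (simp add: dot_square_norm power2_eq_square)
    finally show ?thesis using e1 e2 by simp
  qed
  have low: "(1 - K) * (v \<bullet> (R1 *v v)) \<le> v \<bullet> (R2 *v v)" for v
  proof -
    have "K * (v \<bullet> (Y *v v)) \<ge> 0" using K0 qY by simp
    then show ?thesis using q1[of v] q2[of v] keyD[of v] by (simp add: algebra_simps abs_le_iff)
  qed
  have up: "v \<bullet> (R2 *v v) \<le> (1 + K) * (v \<bullet> (R1 *v v))" for v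
  proof -
    have "K * (v \<bullet> (Y *v v)) \<ge> 0" using K0 qY by simp
    then show ?thesis using q1[of v] q2[of v] keyD[of v] by (simp add: algebra_simps abs_le_iff)
  qed
  obtain v1 where v1: "v1 \<noteq> 0" "v1 \<bullet> (R1 *v v1) = lambda_min R1 * (v1 \<bullet> v1)"
    using lmin[OF rR1] by blast
  obtain v2 where v2: "v2 \<noteq> 0" "v2 \<bullet> (R2 *v v2) = lambda_min R2 * (v2 \<bullet> v2)"
    using lmin[OF rR2] by blast
  have ge1: "lambda_min R1 * (v \<bullet> v) \<le> v \<bullet> (R1 *v v)" for v using lmin[OF rR1] by blast
  have ge2: "lambda_min R2 * (v \<bullet> v) \<le> v \<bullet> (R2 *v v)" for v using lmin[OF rR2] by blast
  have l1: "(1 - K) * lambda_min R1 \<le> lambda_min R2"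
  proof -
    have p: "v2 \<bullet> v2 > 0" using v2 by simp
    have "(1 - K) * (lambda_min R1 * (v2 \<bullet> v2)) \<le> (1 - K) * (v2 \<bullet> (R1 *v v2))"
      using ge1[of v2] K_lt by (intro mult_left_mono) auto
    also have "\<dots> \<le> lambda_min R2 * (v2 \<bullet> v2)" using low[of v2] v2 by simp
    finally have "((1 - K) * lambda_min R1) * (v2 \<bullet> v2) \<le> lambda_min R2 * (v2 \<bullet> v2)"
      by (simp add: algebra_simps)
    then show ?thesis using p mult_le_cancel_right_pos by blast
  qed
  have l2: "lambda_min R2 \<le> (1 + K) * lambda_min R1"
  proof -
    have p: "v1 \<bullet> v1 > 0" using v1 by simp
    have "lambda_min R2 * (v1 \<bullet> v1) \<le> (1 + K) * (v1 \<bullet> (R1 *v v1))"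
      using ge2[of v1] up[of v1] by linarith
    also have "\<dots> = ((1 + K) * lambda_min R1) * (v1 \<bullet> v1)" using v1 by simp
    finally show ?thesis using p mult_le_cancel_right_pos by blast
  qed
  have m1: "mu_RQ d1 d2 lam nu A B = sqrt (lambda_min R1)" by (simp add: mu_RQ_def R1_def)
  have m2: "mu_RQ d1 d2 lam nu A (\<lambda>j. B j + C j) = sqrt (lambda_min R2)"
    by (simp add: mu_RQ_def R2_def)
  have s1: "sqrt (1 - K) * sqrt (lambda_min R1) \<le> sqrt (lambda_min R2)"
    using l1 real_sqrt_le_mono by (metis real_sqrt_mult)
  have s2: "sqrt (lambda_min R2) \<le> sqrt (1 + K) * sqrt (lambda_min R1)"
    using l2 real_sqrt_le_mono by (metis real_sqrt_mult)
  show ?thesis unfolding m1 m2 using s1 s2 by blast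
qed

end
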